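(* Fix integers $N\ge 2$ and $K\ge 1$. The classes $M^{\text{ComplEx}}_{KN}$ and $M^{\text{HolE}}_{2KN+1}$ are universal, i.e. $\pi(\mathcal{M}^{\text{ComplEx}}_{KN})=\pi(\mathcal{M}^{\text{HolE}}_{2KN+1})=\pi(\mathbb{R}^{N\times N\times K})$.
   Context: There are $N$ entities and $K$ relations. A score-based model assigns a score $s_k(i,j)\in\mathbb{R}$ to each triple, $i,j\in\{1,\dots,N\}$, $k\in\{1,\dots,K\}$; its scoring tensor $\mathcal{S}\in\mathbb{R}^{N\times N\times K}$ has frontal slices $\mathbf{S}_k$ with $[\mathbf{S}_k]_{ij}=s_k(i,j)$. For a real $N\times N$ matrix $\mathbf{S}$, $\pi(\mathbf{S})$ is the matrix of dense ranks: $\pi_{ij}(\mathbf{S})=1+$ (number of distinct values among entries of $\mathbf{S}$ strictly larger than $s_{ij}$). For tensors, $\pi$ acts slicewise; for a set $X$, $\pi(X)=\{\pi(x):x\in X\}$. ComplEx of size $r$: parameters $\mathbf{A}\in\mathbb{C}^{N\times r}$ (rows $\mathbf{a}_i$), $\mathbf{R}\in\mathbb{C}^{K\times r}$ (rows $\mathbf{r}_k$), score $\mathrm{Re}(\mathbf{a}_i^T\mathrm{diag}(\mathbf{r}_k)\overline{\mathbf{a}_j})$. HolE of size $r$: parameters $\mathbf{A}\in\mathbb{R}^{N\times r}$, $\mathbf{R}\in\mathbb{R}^{K\times r}$, score $\mathbf{r}_k^T(\mathbf{a}_i\star\mathbf{a}_j)$ where $(\mathbf{a}\star\mathbf{b})_m=\sum_{t=1}^r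 a_t\, b_{((m+t-2)\bmod r)+1}$ is circular correlation. $\mathcal{M}^t_r$ is the set of scoring tensors of all models of type $t$ and size $r$. *)

theory Defs
  imports Complex_Main
begin

text \<open>Conventions: entities are indexed 0..N-1, relations 0..K-1, embedding
coordinates 0..r-1. A tensor in R^{N x N x K} is a function
nat => nat => nat => real that vanishes outside the index range
(extensional representation).\<close>

type_synonym tensor = "nat \<Rightarrow> nat \<Rightarrow> nat \<Rightarrow> real"

definition restrict_tensor :: "nat \<Rightarrow> nat \<Rightarrow> tensor \<Rightarrow> tensor" where
  "restrict_tensor N K S = (\<lambda>i j k. if i < N \<and> j < N \<and> k < K then S i j k else 0)"

definition all_tensors :: "nat \<Rightarrow> nat \<Rightarrow> tensor set" where
  "all_tensors N K = {S. \<forall>i j k. \<not> (i < N \<and> j < N \<and> k < K) \<longrightarrow> S i j k = 0}"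

definition dense_rank :: "nat \<Rightarrow> (nat \<Rightarrow> nat \<Rightarrow> real) \<Rightarrow> nat \<Rightarrow> nat \<Rightarrow> nat" where
  "dense_rank N M i j = 1 + card {v. (\<exists>i' j'. i' < N \<and> j' < N \<and> v = M i' j') \<and> v > M i j}"

text \<open>pi acting slicewise on an N x N x K tensor (0 outside the index range).\<close>
definition rank_tensor :: "nat \<Rightarrow> nat \<Rightarrow> tensor \<Rightarrow> (nat \<Rightarrow> nat \<Rightarrow> nat \<Rightarrow> nat)" where
  "rank_tensor N K S = (\<lambda>i j k. if i < N \<and> j < N \<and> k < K
      then dense_rank N (\<lambda>a b. S a b k) i j else 0)"

definition complex_tensor :: "nat \<Rightarrow> nat \<Rightarrow> nat \<Rightarrow> (nat \<Rightarrow> nat \<Rightarrow> complex)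
    \<Rightarrow> (nat \<Rightarrow> nat \<Rightarrow> complex) \<Rightarrow> tensor" where
  "complex_tensor N K r A R = restrict_tensor N K
     (\<lambda>i j k. Re (\<Sum>t<r. A i t * R k t * cnj (A j t)))"

definition ComplEx_models :: "nat \<Rightarrow> nat \<Rightarrow> nat \<Rightarrow> tensor set" where
  "ComplEx_models N K r = {complex_tensor N K r A R | A R. True}"

definition circ_corr :: "nat \<Rightarrow> (nat \<Rightarrow> real) \<Rightarrow> (nat \<Rightarrow> real) \<Rightarrow> nat \<Rightarrow> real" where
  "circ_corr r a b m = (\<Sum>t<r. a t * b ((m + t) mod r))"

definition hole_tensor :: "nat \<Rightarrow> nat \<Rightarrow> nat \<Rightarrow> (nat \<Rightarrow> nat \<Rightarrow> real)
    \<Rightarrow> (nat \<Rightarrow> nat \<Rightarrow> real) \<Rightarrow> tensor" where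
  "hole_tensor N K r A R = restrict_tensor N K
     (\<lambda>i j k. \<Sum>m<r. R k m * circ_corr r (A i) (A j) m)"

definition HolE_models :: "nat \<Rightarrow> nat \<Rightarrow> nat \<Rightarrow> tensor set" where
  "HolE_models N K r = {hole_tensor N K r A R | A R. True}"

end

theory Submission
  imports Defs
begin


definition rep :: "nat \<Rightarrow> (nat \<Rightarrow> nat \<Rightarrow> real) \<Rightarrow> bool" where
  "rep n X \<longleftrightarrow> (\<exists>A c. \<forall>i<n. \<forall>j<n. X i j = Re (\<Sum>m<n. A i m * c m * cnj (A j m)))"

lemma rep_pivot:
  assumes piv: "\<forall>j<n. X n n \<noteq> 0 \<or> X n j + X j n = 0"
    and IH: "\<And>Y. rep n Y"
  shows "rep (Suc n) X"
proof -
  define d where "d = X n n"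
  define c where "c = Complex d 1"
  define v where "v j = Complex ((X n j + X j n)/(2*d)) ((X n j - X j n)/2)" for j
  define Y where "Y i j = X i j - Re (c * v i * cnj (v j))" for i j
  obtain A0 c0 where h: "\<forall>i<n. \<forall>j<n. Y i j = Re (\<Sum>m<n. A0 i m * c0 m * cnj (A0 j m))"
    using IH[of Y] unfolding rep_def by blast
  define A where "A i m = (if m = n then (if i = n then 1 else v i) else if i = n then 0 else A0 i m)" for i m
  define cc where "cc m = (if m = n then c else c0 m)" for m
  have dx: "d * ((X n j + X j n)/(2*d)) = (X n j + X j n)/2" if "j < n" for j
    using piv that unfolding d_def by (cases "X n n = 0") auto
  have "\<forall>i<Suc n. \<forall>j<Suc n. X i j = Re (\<Sum>m<Suc n. A i m * cc m * cnj (A j m))"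
  proof (intro allI impI)
    fix i j assume i: "i < Suc n" and j: "j < Suc n"
    have s: "(\<Sum>m<n. A i m * cc m * cnj (A j m)) =
        (if i = n \<or> j = n then 0 else \<Sum>m<n. A0 i m * c0 m * cnj (A0 j m))"
      unfolding A_def cc_def by (auto intro!: sum.cong)
    show "X i j = Re (\<Sum>m<Suc n. A i m * cc m * cnj (A j m))"
    proof (cases "i = n")
      case True
      show ?thesis
      proof (cases "j = n")
        case True
        then show ?thesis using \<open>i = n\<close> s by (simp add: A_def cc_def c_def d_def)
      next
        case False
        then have jn: "j < n" using j by simp
        have "Re (c * cnj (v j)) = d * ((X n j + X j n)/(2*d)) + (X n j - X j n)/2"
          by (simp add: c_def v_def)
        also have "\<dots> = X n j" unfolding dx[OF jn] by (simp add: field_simps)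
        finally show ?thesis using True False s by (simp add: A_def cc_def)
      qed
    next
      case False
      then have iN: "i < n" using i by simp
      show ?thesis
      proof (cases "j = n")
        case True
        have "Re (c * v i) = d * ((X n i + X i n)/(2*d)) - (X n i - X i n)/2"
          by (simp add: c_def v_def)
        also have "\<dots> = X i n" unfolding dx[OF iN] by (simp add: field_simps)
        finally show ?thesis using True False s by (simp add: A_def cc_def mult.commute)
      next
        case False
        then have jn: "j < n" using j by simp
        have "X i j = Y i j + Re (c * v i * cnj (v j))" unfolding Y_def by simp
        then show ?thesis using h iN jn False \<open>i \<noteq> n\<close> s by (simp add: A_def cc_def mult.commute)
      qed
    qed
  qed
  then show ?thesis unfolding rep_def by blast
qed

lemma rep_congr:
  assumes jn: "j < n" and r: "rep (Suc n) (\<lambda>a b. X a b + (if a = n then t * X j b else 0)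
      + (if b = n then t * X a j else 0) + (if a = n \<and> b = n then t^2 * X j j else 0))"
  shows "rep (Suc n) X"
proof -
  define X' where "X' = (\<lambda>a b. X a b + (if a = n then t * X j b else 0)
      + (if b = n then t * X a j else 0) + (if a = n \<and> b = n then t^2 * X j j else 0))"
  obtain A' c where h: "\<forall>a<Suc n. \<forall>b<Suc n. X' a b = Re (\<Sum>m<Suc n. A' a m * c m * cnj (A' b m))"
    using r unfolding rep_def X'_def by blast
  define G where "G a b = (\<Sum>m<Suc n. A' a m * c m * cnj (A' b m))" for a b
  define A where "A a m = (if a = n then A' n m - of_real t * A' j m else A' a m)" for a m
  have e1: "(\<Sum>m<Suc n. A n m * c m * cnj (A' b m)) = G n b - of_real t * G j b" for b
    unfolding A_def G_def by (simp add: algebra_simps sum_subtractf sum_distrib_left)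
  have e2: "(\<Sum>m<Suc n. A' a m * c m * cnj (A n m)) = G a n - of_real t * G a j" for a
    unfolding A_def G_def by (simp add: algebra_simps sum_subtractf sum_distrib_left)
  have e3: "(\<Sum>m<Suc n. A n m * c m * cnj (A n m)) = G n n - of_real t * G j n - of_real t * G n j
      + of_real (t^2) * G j j"
    unfolding A_def G_def by (simp add: algebra_simps sum_subtractf sum_distrib_left sum.distrib power2_eq_square)
  have hG: "Re (G a b) = X' a b" if "a < Suc n" "b < Suc n" for a b
    using h that unfolding G_def by auto
  have jS: "j < Suc n" "j \<noteq> n" using jn by auto
  have "\<forall>a<Suc n. \<forall>b<Suc n. X a b = Re (\<Sum>m<Suc n. A a m * c m * cnj (A b m))"
  proof (intro allI impI)
    fix a b assume a: "a < Suc n" and b: "b < Suc n"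
    show "X a b = Re (\<Sum>m<Suc n. A a m * c m * cnj (A b m))"
    proof (cases "a = n")
      case True
      show ?thesis
      proof (cases "b = n")
        case True
        have "Re (\<Sum>m<Suc n. A n m * c m * cnj (A n m)) = Re (G n n) - t * Re (G j n) - t * Re (G n j) + t^2 * Re (G j j)"
          unfolding e3 by simp
        then show ?thesis using \<open>a = n\<close> True hG[of n n] hG[of j n] hG[of n j] hG[of j j] jS
          by (simp add: X'_def power2_eq_square algebra_simps)
      next
        case False
        have "A b = A' b" using False by (auto simp: A_def)
        then show ?thesis using True False e1[of b] hG[of n b] hG[of j b] jS b
          by (simp add: X'_def)
      qed
    next
      case False
      have Aa: "A a = A' a" using False by (auto simp: A_def)
      show ?thesis
      proof (cases "b = n")
        case True
        then show ?thesis using False Aa e2[of a] hG[of a n] hG[of a j] jS a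
          by (simp add: X'_def)
      next
        case False
        have "A b = A' b" using False by (auto simp: A_def)
        then show ?thesis using Aa \<open>a \<noteq> n\<close> False hG[of a b] a b unfolding G_def
          by (simp add: X'_def)
      qed
    qed
  qed
  then show ?thesis unfolding rep_def by blast
qed

lemma rep_all: "rep n X"
proof (induction n arbitrary: X)
  case 0
  then show ?case unfolding rep_def by simp
next
  case (Suc n)
  show ?case
  proof (cases "\<forall>j<n. X n n \<noteq> 0 \<or> X n j + X j n = 0")
    case True
    then show ?thesis using rep_pivot Suc.IH by blast
  next
    case False
    then obtain j where jn: "j < n" and X0: "X n n = 0" and s: "X n j + X j n \<noteq> 0" by blast
    define t :: real where "t = (if X n j + X j n + X j j \<noteq> 0 then 1 else -1)"
    define X' where "X' = (\<lambda>a b. X a b + (if a = n then t * X j b else 0)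
      + (if b = n then t * X a j else 0) + (if a = n \<and> b = n then t^2 * X j j else 0))"
    have "X' n n \<noteq> 0"
      using s X0 unfolding X'_def t_def by (auto simp: algebra_simps)
    then have "rep (Suc n) X'" by (intro rep_pivot Suc.IH) simp
    then show ?thesis using rep_congr[OF jn] unfolding X'_def by blast
  qed
qed

lemma block_sum:
  fixes f :: "nat \<Rightarrow> 'a::comm_monoid_add"
  assumes k: "k < K" and z: "\<And>t. t < K * N \<Longrightarrow> t div N \<noteq> k \<Longrightarrow> f t = 0" and N: "0 < N"
  shows "(\<Sum>t<K*N. f t) = (\<Sum>m<N. f (k*N + m))"
proof -
  have sub: "{k*N..<k*N+N} \<subseteq> {..<K*N}"
  proof
    fix t assume "t \<in> {k*N..<k*N+N}"
    then have "t < (k+1)*N" by simp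
    also have "\<dots> \<le> K*N" using k by (intro mult_right_mono) auto
    finally show "t \<in> {..<K*N}" by simp
  qed
  have z2: "\<forall>t\<in>{..<K * N} - {k * N..<k * N + N}. f t = 0"
  proof
    fix t assume t: "t \<in> {..<K * N} - {k * N..<k * N + N}"
    have "t div N \<noteq> k"
    proof
      assume d: "t div N = k"
      have "t = k*N + t mod N" using d div_mult_mod_eq[of t N] by simp
      moreover have "t mod N < N" using N by simp
      ultimately have "k*N \<le> t \<and> t < k*N + N" by linarith
      then show False using t by auto
    qed
    then show "f t = 0" using z t by auto
  qed
  have "(\<Sum>t<K*N. f t) = (\<Sum>t\<in>{k*N..<k*N+N}. f t)"
    using sum.mono_neutral_right[OF _ sub z2] by simp
  also have "\<dots> = (\<Sum>m<N. f (k*N + m))"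
  proof -
    have e: "{k*N..<k*N+N} = {0 + k*N..<N + k*N}" by (simp add: add.commute)
    show ?thesis unfolding e sum.shift_bounds_nat_ivl atLeast0LessThan by (simp add: add.commute)
  qed
  finally show ?thesis .
qed

lemma complex_exact:
  assumes S: "S \<in> all_tensors N K" and N: "0 < N"
  shows "\<exists>A R. \<forall>i<N. \<forall>j<N. \<forall>k<K.
     S i j k = Re (\<Sum>t<K*N. A i t * R k t * cnj (A j t))"
proof -
  have "\<forall>k. \<exists>p. \<forall>i<N. \<forall>j<N. S i j k = Re (\<Sum>m<N. fst p i m * snd p m * cnj (fst p j m))"
  proof
    fix k
    obtain A c where "\<forall>i<N. \<forall>j<N. S i j k = Re (\<Sum>m<N. A i m * c m * cnj (A j m))"
      using rep_all[of N "\<lambda>i j. S i j k"] unfolding rep_def by blast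
    then show "\<exists>p. \<forall>i<N. \<forall>j<N. S i j k = Re (\<Sum>m<N. fst p i m * snd p m * cnj (fst p j m))"
      by (intro exI[of _ "(A, c)"]) simp
  qed
  from choice[OF this] obtain F where F: "\<forall>k. \<forall>i<N. \<forall>j<N. S i j k = Re (\<Sum>m<N. fst (F k) i m * snd (F k) m * cnj (fst (F k) j m))"
    by blast
  define Af where "Af k = fst (F k)" for k
  define cf where "cf k = snd (F k)" for k
  have h: "S i j k = Re (\<Sum>m<N. Af k i m * cf k m * cnj (Af k j m))" if "i < N" "j < N" for i j k
    using F that unfolding Af_def cf_def by blast
  define A where "A i t = Af (t div N) i (t mod N)" for i t
  define R where "R k t = (if t div N = k then cf k (t mod N) else 0)" for k t
  have "\<forall>i<N. \<forall>j<N. \<forall>k<K. S i j k = Re (\<Sum>t<K*N. A i t * R k t * cnj (A j t))"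
  proof (intro allI impI)
    fix i j k assume i: "i < N" and j: "j < N" and k: "k < K"
    have "(\<Sum>t<K*N. A i t * R k t * cnj (A j t)) = (\<Sum>m<N. A i (k*N+m) * R k (k*N+m) * cnj (A j (k*N+m)))"
      by (rule block_sum[OF k _ N]) (simp add: R_def)
    also have "\<dots> = (\<Sum>m<N. Af k i m * cf k m * cnj (Af k j m))"
      using N by (intro sum.cong) (auto simp: A_def R_def)
    finally show "S i j k = Re (\<Sum>t<K*N. A i t * R k t * cnj (A j t))" unfolding h[OF i j] by (rule arg_cong[of _ _ Re, symmetric])
  qed
  then show ?thesis by blast
qed

lemma restr_in: "i < N \<Longrightarrow> j < N \<Longrightarrow> k < K \<Longrightarrow> restrict_tensor N K F i j k = F i j k"
  by (simp add: restrict_tensor_def)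

lemma restr_out: "\<not> (i < N \<and> j < N \<and> k < K) \<Longrightarrow> restrict_tensor N K F i j k = 0"
  unfolding restrict_tensor_def by (simp only: if_False)

lemma complex_all: "0 < N \<Longrightarrow> all_tensors N K \<subseteq> ComplEx_models N K (K*N)"
proof
  fix S assume N: "0 < N" and S: "S \<in> all_tensors N K"
  obtain A R where h: "\<forall>i<N. \<forall>j<N. \<forall>k<K. S i j k = Re (\<Sum>t<K*N. A i t * R k t * cnj (A j t))"
    using complex_exact[OF S N] by blast
  have "S i j k = complex_tensor N K (K*N) A R i j k" for i j k
  proof (cases "i < N \<and> j < N \<and> k < K")
    case True
    then have i: "i < N" and j: "j < N" and k: "k < K" by auto
    show ?thesis unfolding complex_tensor_def restr_in[OF i j k] using h i j k by blast
  next
    case False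
    have "\<forall>i j k. \<not> (i < N \<and> j < N \<and> k < K) \<longrightarrow> S i j k = 0"
      using S unfolding all_tensors_def by (simp only: mem_Collect_eq)
    then have "S i j k = 0" using False by blast
    then show ?thesis unfolding complex_tensor_def restr_out[OF False] .
  qed
  then have e: "S = complex_tensor N K (K*N) A R" by (intro ext)
  show "S \<in> ComplEx_models N K (K*N)" unfolding ComplEx_models_def
    by (rule CollectI, rule exI[of _ A], rule exI[of _ R], simp only: e simp_thms)
qed



definition om :: "nat \<Rightarrow> complex" where "om r = cis (2*pi / real r)"

lemma om_pow: "om r ^ n = cis (2 * pi * real n / real r)"
  by (simp add: om_def DeMoivre mult_ac)

lemma om_r: "0 < r \<Longrightarrow> om r ^ r = 1"
  by (simp add: om_pow)

lemma om_mod: "0 < r \<Longrightarrow> om r ^ (n mod r) = om r ^ n"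
proof -
  assume r: "0 < r"
  have "om r ^ n = om r ^ (r * (n div r) + n mod r)" by simp
  also have "\<dots> = (om r ^ r) ^ (n div r) * om r ^ (n mod r)"
    by (simp only: power_add power_mult)
  also have "(om r ^ r) ^ (n div r) = 1" using om_r[OF r] by simp
  finally show ?thesis by simp
qed

lemma om_dvd: "0 < r \<Longrightarrow> r dvd n \<Longrightarrow> om r ^ n = 1"
  using om_mod[of r n] by simp

lemma om_ne1: "0 < r \<Longrightarrow> \<not> r dvd n \<Longrightarrow> om r ^ n \<noteq> 1"
proof
  assume r: "0 < r" and nd: "\<not> r dvd n" and e: "om r ^ n = 1"
  define s where "s = n mod r"
  have s0: "s \<noteq> 0" using nd unfolding s_def by (simp add: dvd_eq_mod_eq_0)
  have sr: "s < r" using r unfolding s_def by simp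
  have "om r ^ s = 1" using e om_mod[OF r, of n] unfolding s_def by simp
  then have "cis (2 * pi * real s / real r) = cis (2 * pi * real 0 / real r)"
    by (simp add: om_pow)
  moreover have "inj_on (\<lambda>k. cis (2 * pi * real k / real r)) {..<r}"
    using bij_betw_roots_unity[of r] r unfolding bij_betw_def by auto
  ultimately have "s = 0" using sr r unfolding inj_on_def by blast
  then show False using s0 by simp
qed

lemma om_sum: "0 < r \<Longrightarrow> (\<Sum>t<r. om r ^ (n*t)) = (if r dvd n then of_nat r else 0)"
proof -
  assume r: "0 < r"
  have p: "om r ^ (n*t) = (om r ^ n) ^ t" for t by (simp add: power_mult)
  show ?thesis
  proof (cases "r dvd n")
    case True
    then show ?thesis unfolding p using om_dvd[OF r True] by simp
  next
    case False
    have x: "om r ^ n \<noteq> 1" by (rule om_ne1[OF r False])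
    have "(om r ^ n) ^ r = 1" using om_r[OF r] by (metis power_mult power_mult_distrib mult.commute power_one)
    then show ?thesis unfolding p sum_gp_strict using x False by simp
  qed
qed

lemma cnj_om_pow: "cnj (om r ^ n) = inverse (om r ^ n)"
  by (simp add: om_pow cis_cnj)

lemma dvd_iff_mod: fixes f g r :: nat shows "f < r \<Longrightarrow> g < r \<Longrightarrow> (r dvd (f + g)) = (f = (r - g) mod r)"
proof -
  assume f: "f < r" and g: "g < r"
  have rg: "(r - g) mod r = (if g = 0 then 0 else r - g)" using g by auto
  show ?thesis
  proof (cases "f + g < r")
    case True
    then have "r dvd (f+g) \<longleftrightarrow> f + g = 0" by (auto dest: dvd_imp_le)
    then show ?thesis using rg True by auto
  next
    case False
    then have "r dvd (f+g) \<longleftrightarrow> r dvd (f+g-r)" by (simp add: dvd_minus_self)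
    also have "\<dots> \<longleftrightarrow> f + g - r = 0" using f g by (auto dest: dvd_imp_le)
    finally show ?thesis using rg False f g by auto
  qed
qed

definition seq :: "nat \<Rightarrow> (nat \<Rightarrow> complex) \<Rightarrow> nat \<Rightarrow> complex" where
  "seq r c t = (\<Sum>g<r. c g * om r ^ (g*t))"

lemma key:
  assumes r: "0 < r" and g: "g < r"
  shows "(\<Sum>t<r. seq r c t * om r ^ (g*t)) = of_nat r * c ((r - g) mod r)"
proof -
  have "(\<Sum>t<r. seq r c t * om r ^ (g*t)) = (\<Sum>t<r. \<Sum>f<r. c f * om r ^ ((f+g)*t))"
    unfolding seq_def sum_distrib_right by (simp add: power_add algebra_simps)
  also have "\<dots> = (\<Sum>f<r. c f * (\<Sum>t<r. om r ^ ((f+g)*t)))"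
    by (subst sum.swap) (simp add: sum_distrib_left)
  also have "\<dots> = (\<Sum>f<r. if f = (r - g) mod r then c f * of_nat r else 0)"
    using dvd_iff_mod[OF _ g] by (intro sum.cong refl) (auto simp: om_sum[OF r])
  also have "\<dots> = of_nat r * c ((r - g) mod r)"
    using r by (simp add: sum.delta mult.commute)
  finally show ?thesis .
qed


lemma cnj_om_pow2:
  assumes r: "0 < r" and g: "g < r"
  shows "cnj (om r ^ (g*t)) = om r ^ (((r - g) mod r) * t)"
proof -
  have d: "r dvd ((r - g) mod r + g)" using g by (cases "g = 0") auto
  have "om r ^ (((r - g) mod r) * t) * om r ^ (g*t) = om r ^ (((r - g) mod r + g) * t)"
    by (simp add: power_add algebra_simps)
  also have "\<dots> = 1" using d by (intro om_dvd[OF r]) simp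
  finally have e: "om r ^ (((r - g) mod r) * t) * om r ^ (g*t) = 1" .
  have nz: "om r ^ (g*t) \<noteq> 0" by (simp add: om_def)
  show ?thesis unfolding cnj_om_pow using e nz by (simp add: field_simps)
qed

definition hatc :: "nat \<Rightarrow> (nat \<Rightarrow> complex) \<Rightarrow> nat \<Rightarrow> complex" where
  "hatc L a g = (if g = 0 then 0 else if g \<le> L then a (g - 1) else cnj (a (2*L - g)))"

lemma hatc_sym: "g < 2*L+1 \<Longrightarrow> hatc L a ((2*L+1 - g) mod (2*L+1)) = cnj (hatc L a g)"
proof -
  assume g: "g < 2*L+1"
  show ?thesis
  proof (cases "g = 0")
    case True then show ?thesis by (simp add: hatc_def)
  next
    case False
    then have m: "(2*L+1 - g) mod (2*L+1) = 2*L+1 - g" using g by simp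
    show ?thesis unfolding m hatc_def using g False
      by (auto simp: Suc_diff_le)
  qed
qed

lemma sum_inv:
  fixes F :: "nat \<Rightarrow> 'a::comm_monoid_add"
  assumes r: "0 < r"
  shows "(\<Sum>g<r. F ((r - g) mod r)) = (\<Sum>g<r. F g)"
proof (rule sum.reindex_bij_witness[where i = "\<lambda>g. (r - g) mod r" and j = "\<lambda>g. (r - g) mod r"])
  fix a assume a: "a \<in> {..<r}"
  then show "(r - (r - a) mod r) mod r = a" by (cases "a = 0") auto
  show "(r - a) mod r \<in> {..<r}" using r by simp
  show "F ((r - a) mod r) = F ((r - a) mod r)" ..
next
  fix b assume b: "b \<in> {..<r}"
  then show "(r - (r - b) mod r) mod r = b" by (cases "b = 0") auto
  show "(r - b) mod r \<in> {..<r}" using r by simp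
qed

lemma seq_real:
  fixes L t :: nat and a :: "nat \<Rightarrow> complex"
  defines "r \<equiv> 2*L+1"
  shows "cnj (seq r (hatc L a) t) = seq r (hatc L a) t"
proof -
  have r: "0 < r" unfolding r_def by simp
  have "cnj (seq r (hatc L a) t) = (\<Sum>g<r. hatc L a ((r - g) mod r) * om r ^ (((r - g) mod r) * t))"
    unfolding seq_def cnj_sum
  proof (intro sum.cong refl)
    fix x assume "x \<in> {..<r}"
    then have x: "x < r" by simp
    have hs: "hatc L a ((r - x) mod r) = cnj (hatc L a x)"
      using hatc_sym[of x L a] x unfolding r_def by simp
    show "cnj (hatc L a x * om r ^ (x * t)) = hatc L a ((r - x) mod r) * om r ^ ((r - x) mod r * t)"
      unfolding hs complex_cnj_mult cnj_om_pow2[OF r x] ..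
  qed
  also have "\<dots> = seq r (hatc L a) t"
    unfolding seq_def by (rule sum_inv[OF r, where F = "\<lambda>g. hatc L a g * om r ^ (g * t)"])
  finally show ?thesis .
qed

lemma real_of_cnj: "cnj z = z \<Longrightarrow> complex_of_real (Re z) = z"
  by (simp add: complex_eq_iff)


lemma seq_shift:
  assumes r: "0 < r"
  shows "seq r c ((m + t) mod r) = (\<Sum>g<r. c g * om r ^ (g*m) * om r ^ (g*t))"
  unfolding seq_def
proof (intro sum.cong refl)
  fix g
  have "om r ^ (g * ((m + t) mod r)) = om r ^ ((g * ((m + t) mod r)) mod r)" using om_mod[OF r] by simp
  also have "\<dots> = om r ^ ((g * (m + t)) mod r)" by (simp add: mod_mult_right_eq)
  also have "\<dots> = om r ^ (g*m) * om r ^ (g*t)" using om_mod[OF r] by (simp add: power_add algebra_simps)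
  finally show "c g * om r ^ (g * ((m + t) mod r)) = c g * om r ^ (g*m) * om r ^ (g*t)" by simp
qed

lemma hole_complex:
  assumes r: "0 < r"
  shows "(\<Sum>m<r. seq r p m * (\<Sum>t<r. seq r a t * seq r b ((m+t) mod r)))
     = (\<Sum>g<r. b g * (of_nat r * a ((r - g) mod r)) * (of_nat r * p ((r - g) mod r)))"
proof -
  have sa: "(\<Sum>t<r. seq r a t * seq r b ((m+t) mod r)) = (\<Sum>g<r. (b g * (of_nat r * a ((r - g) mod r))) * om r ^ (g*m))" for m
  proof -
    have "(\<Sum>t<r. seq r a t * seq r b ((m+t) mod r)) = (\<Sum>t<r. \<Sum>g<r. (b g * om r ^ (g*m)) * (seq r a t * om r ^ (g*t)))"
      unfolding seq_shift[OF r] sum_distrib_left by (intro sum.cong refl) (simp add: mult_ac)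
    also have "\<dots> = (\<Sum>g<r. (b g * om r ^ (g*m)) * (\<Sum>t<r. seq r a t * om r ^ (g*t)))"
      by (subst sum.swap) (simp add: sum_distrib_left)
    also have "\<dots> = (\<Sum>g<r. (b g * om r ^ (g*m)) * (of_nat r * a ((r - g) mod r)))"
      by (intro sum.cong refl) (simp add: key[OF r])
    finally show ?thesis by (simp add: mult_ac)
  qed
  have "(\<Sum>m<r. seq r p m * (\<Sum>t<r. seq r a t * seq r b ((m+t) mod r)))
     = (\<Sum>m<r. \<Sum>g<r. (b g * (of_nat r * a ((r - g) mod r))) * (seq r p m * om r ^ (g*m)))"
    unfolding sa sum_distrib_left by (intro sum.cong refl) (simp add: mult_ac)
  also have "\<dots> = (\<Sum>g<r. (b g * (of_nat r * a ((r - g) mod r))) * (\<Sum>m<r. seq r p m * om r ^ (g*m)))"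
    by (subst sum.swap) (simp add: sum_distrib_left)
  also have "\<dots> = (\<Sum>g<r. b g * (of_nat r * a ((r - g) mod r)) * (of_nat r * p ((r - g) mod r)))"
    by (intro sum.cong refl) (simp add: key[OF r])
  finally show ?thesis .
qed

lemma sum_add_split: fixes b :: nat shows "(\<Sum>g<a+b. F g) = (\<Sum>g<a. F g) + (\<Sum>g<b. (F (a+g) :: 'x::comm_monoid_add))"
  by (induction b) (simp_all add: add_ac)

lemma hat_split:
  "(\<Sum>g<2*L+1. hatc L a g * hatc L p g * cnj (hatc L b g))
    = (\<Sum>f<L. a f * p f * cnj (b f) + cnj (a f * p f * cnj (b f)))"
proof -
  define F where "F g = hatc L a g * hatc L p g * cnj (hatc L b g)" for g
  have "(\<Sum>g<Suc (L+L). F g) = F 0 + (\<Sum>g<L+L. F (Suc g))" by (rule sum.lessThan_Suc_shift)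
  also have "\<dots> = (\<Sum>g<L. F (Suc g)) + (\<Sum>g<L. F (Suc (L + g)))"
    by (simp add: sum_add_split F_def hatc_def)
  also have "(\<Sum>g<L. F (Suc g)) = (\<Sum>f<L. a f * p f * cnj (b f))"
    by (intro sum.cong refl) (simp add: F_def hatc_def)
  also have "(\<Sum>g<L. F (Suc (L + g))) = (\<Sum>g<L. cnj (a (L - Suc g) * p (L - Suc g) * cnj (b (L - Suc g))))"
  proof (intro sum.cong refl)
    fix g assume "g \<in> {..<L}"
    then have e: "2 * L - Suc (L + g) = L - Suc g" by simp
    show "F (Suc (L + g)) = cnj (a (L - Suc g) * p (L - Suc g) * cnj (b (L - Suc g)))"
      unfolding F_def hatc_def e by simp
  qed
  also have "\<dots> = (\<Sum>f<L. cnj (a f * p f * cnj (b f)))"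
    by (rule sum.nat_diff_reindex)
  finally show ?thesis unfolding F_def by (simp add: sum.distrib mult_2)
qed

lemma hole_real:
  fixes L :: nat and a b p :: "nat \<Rightarrow> complex"
  defines "r \<equiv> 2*L+1"
  shows "(\<Sum>m<r. Re (seq r (hatc L p) m) * (\<Sum>t<r. Re (seq r (hatc L a) t) * Re (seq r (hatc L b) ((m+t) mod r))))
      = 2 * real r * real r * Re (\<Sum>f<L. a f * p f * cnj (b f))"
proof -
  have r: "0 < r" unfolding r_def by simp
  have R: "complex_of_real (Re (seq r (hatc L c) t)) = seq r (hatc L c) t" for c t
    unfolding r_def by (rule real_of_cnj[OF seq_real])
  have hs: "hatc L c ((r - g) mod r) = cnj (hatc L c g)" if "g < r" for c g
    using hatc_sym[of g L c] that unfolding r_def by simp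
  define LHS where "LHS = (\<Sum>m<r. Re (seq r (hatc L p) m) * (\<Sum>t<r. Re (seq r (hatc L a) t) * Re (seq r (hatc L b) ((m+t) mod r))))"
  have "complex_of_real LHS = (\<Sum>m<r. seq r (hatc L p) m * (\<Sum>t<r. seq r (hatc L a) t * seq r (hatc L b) ((m+t) mod r)))"
    unfolding LHS_def of_real_sum of_real_mult R ..
  also have "\<dots> = (\<Sum>g<r. hatc L b g * (of_nat r * hatc L a ((r - g) mod r)) * (of_nat r * hatc L p ((r - g) mod r)))"
    by (rule hole_complex[OF r])
  also have "\<dots> = of_nat r * of_nat r * (\<Sum>g<r. cnj (hatc L a g * hatc L p g * cnj (hatc L b g)))"
    unfolding sum_distrib_left by (intro sum.cong refl) (simp add: hs mult_ac)
  finally have "LHS = Re (of_nat r * of_nat r * (\<Sum>g<r. cnj (hatc L a g * hatc L p g * cnj (hatc L b g))))"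
    by (metis Re_complex_of_real)
  also have "\<dots> = real r * real r * Re (\<Sum>g<r. hatc L a g * hatc L p g * cnj (hatc L b g))"
  proof -
    define S where "S = (\<Sum>g<r. hatc L a g * hatc L p g * cnj (hatc L b g))"
    have cs: "(\<Sum>g<r. cnj (hatc L a g * hatc L p g * cnj (hatc L b g))) = cnj S"
      unfolding S_def by (rule cnj_sum[symmetric])
    show ?thesis unfolding cs S_def[symmetric] by simp
  qed
  also have "(\<Sum>g<r. hatc L a g * hatc L p g * cnj (hatc L b g)) = (\<Sum>f<L. a f * p f * cnj (b f) + cnj (a f * p f * cnj (b f)))"
    unfolding r_def by (rule hat_split)
  also have "Re \<dots> = 2 * Re (\<Sum>f<L. a f * p f * cnj (b f))"
  proof -
    define S where "S = (\<Sum>f<L. a f * p f * cnj (b f))"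
    have cs: "(\<Sum>f<L. a f * p f * cnj (b f) + cnj (a f * p f * cnj (b f))) = S + cnj S"
      unfolding S_def sum.distrib cnj_sum ..
    show ?thesis unfolding cs S_def[symmetric] by simp
  qed
  finally show ?thesis unfolding LHS_def by simp
qed


lemma restrict_in_all: "restrict_tensor N K F \<in> all_tensors N K"
  unfolding all_tensors_def using restr_out by blast

lemma complex_sub: "ComplEx_models N K r \<subseteq> all_tensors N K"
  unfolding ComplEx_models_def complex_tensor_def using restrict_in_all by blast

lemma hole_sub: "HolE_models N K r \<subseteq> all_tensors N K"
  unfolding HolE_models_def hole_tensor_def using restrict_in_all by blast

lemma hole_all:
  assumes N: "0 < N"
  shows "all_tensors N K \<subseteq> HolE_models N K (2*K*N+1)"
proof
  fix S assume S: "S \<in> all_tensors N K"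
  define L where "L = K*N"
  define r where "r = 2*L+1"
  have rr: "2*K*N+1 = r" unfolding r_def L_def by simp
  obtain Ac Rc where h: "\<forall>i<N. \<forall>j<N. \<forall>k<K. S i j k = Re (\<Sum>t<K*N. Ac i t * Rc k t * cnj (Ac j t))"
    using complex_exact[OF S N] by blast
  define c :: real where "c = 2 * real r * real r"
  have c0: "c \<noteq> 0" unfolding c_def r_def by simp
  define rho where "rho k f = Rc k f / complex_of_real c" for k f
  define A where "A i t = Re (seq r (hatc L (Ac i)) t)" for i t
  define R where "R k m = Re (seq r (hatc L (rho k)) m)" for k m
  have "S i j k = hole_tensor N K r A R i j k" for i j k
  proof (cases "i < N \<and> j < N \<and> k < K")
    case True
    then have i: "i < N" and j: "j < N" and k: "k < K" by auto
    have "hole_tensor N K r A R i j k = (\<Sum>m<r. R k m * circ_corr r (A i) (A j) m)"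
      unfolding hole_tensor_def restr_in[OF i j k] ..
    also have "\<dots> = (\<Sum>m<r. Re (seq r (hatc L (rho k)) m) * (\<Sum>t<r. Re (seq r (hatc L (Ac i)) t) * Re (seq r (hatc L (Ac j)) ((m+t) mod r))))"
      unfolding R_def A_def circ_corr_def ..
    also have "\<dots> = c * Re (\<Sum>f<L. Ac i f * rho k f * cnj (Ac j f))"
      unfolding r_def c_def by (rule hole_real)
    also have "(\<Sum>f<L. Ac i f * rho k f * cnj (Ac j f)) = (\<Sum>f<L. Ac i f * Rc k f * cnj (Ac j f)) / complex_of_real c"
      unfolding rho_def sum_divide_distrib by (intro sum.cong refl) simp
    also have "c * Re ((\<Sum>f<L. Ac i f * Rc k f * cnj (Ac j f)) / complex_of_real c) = Re (\<Sum>f<L. Ac i f * Rc k f * cnj (Ac j f))"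
    proof -
      define W where "W = (\<Sum>f<L. Ac i f * Rc k f * cnj (Ac j f))"
      show ?thesis unfolding W_def[symmetric] using c0 by (simp add: Re_divide_of_real)
    qed
    finally show ?thesis using h i j k unfolding L_def by simp
  next
    case False
    have "\<forall>i j k. \<not> (i < N \<and> j < N \<and> k < K) \<longrightarrow> S i j k = 0"
      using S unfolding all_tensors_def by (simp only: mem_Collect_eq)
    then have "S i j k = 0" using False by blast
    then show ?thesis unfolding hole_tensor_def restr_out[OF False] .
  qed
  then have e: "S = hole_tensor N K r A R" by (intro ext)
  show "S \<in> HolE_models N K (2*K*N+1)" unfolding HolE_models_def rr
    by (rule CollectI, rule exI[of _ A], rule exI[of _ R], simp only: e simp_thms)
qed

theorem theorem7:
  fixes N K :: nat
  assumes "N \<ge> 2" and "K \<ge> 1"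
  shows "rank_tensor N K ` ComplEx_models N K (K * N) = rank_tensor N K ` all_tensors N K
       \<and> rank_tensor N K ` HolE_models N K (2 * K * N + 1) = rank_tensor N K ` all_tensors N K"
proof -
  have N: "0 < N" using assms by simp
  have "ComplEx_models N K (K * N) = all_tensors N K"
    using complex_sub complex_all[OF N] by blast
  moreover have "HolE_models N K (2 * K * N + 1) = all_tensors N K"
    using hole_sub hole_all[OF N] by blast
  ultimately show ?thesis by simp
qed

end
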